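(* With the notation below, if $\Xi_{ijk}>0$, then the three lengths $l_{ij},l_{jk},l_{ki}$ satisfy the strict triangle inequalities, and the orthogonal circle of the resulting hyperbolic triangle is compact. In particular, for a triangulation $\mathcal T$, the set $\Xi(\mathcal T)$ of $(\mathbf I,\mathbf r)\in\mathbb R^{E(\mathcal T)}_{>1}\times\mathbb R^V_{>0}$ with $\Xi_{ijk}>0$ for every face $f_{ijk}$ is contained in $Q_h(\mathcal T)$.
   Context: For a face $f_{ijk}$ with radii $r_i,r_j,r_k>0$ at its vertices and inversive distances $a=I_{jk},b=I_{ki},c=I_{ij}>1$ on its edges, set $p=\cosh r_i,q=\cosh r_j,r=\cosh r_k$, $x=\cosh l_{jk}=qr+a\sinh r_j\sinh r_k$, $y=\cosh l_{ki}=rp+b\sinh r_k\sinh r_i$, $z=\cosh l_{ij}=pq+c\sinh r_i\sinh r_j$, and $$\Xi_{ijk}=p^2(1-x^2)+q^2(1-y^2)+r^2(1-z^2)+2pq(xy-z)+2pr(xz-y)+2qr(yz-x).$$ Orthogonal circle: embed the triangle isometrically in the Poincaré disk $\mathbb D\subset\mathbb R^2$; the hyperbolic vertex circles are Euclidean circles, and the orthogonal circle is the unique Euclidean circle orthogonal to all three; it is compact if it lies in the open disk $\mathbb D$. $Q_h(\mathcal T)$ is the set of $(\mathbf I,\mathbf r)$ whose lengths $l_{ij}=\operatorname{arccosh}(\cosh r_i\cosh r_j+I_{ij}\sinh r_i\sinh r_j)$ satisfy strict triangle inequalities on every face of the triangulation $\mathcal T$ (a $\Delta$-complex triangulation of a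 marked closed surface $(S,V)$). *)

theory Defs
  imports "HOL-Analysis.Analysis"
begin

definition inv_len :: "real \<Rightarrow> real \<Rightarrow> real \<Rightarrow> real" where
  "inv_len ri rj I = arcosh (cosh ri * cosh rj + I * sinh ri * sinh rj)"

text \<open>The quantity Xi_ijk; a = I_jk, b = I_ki, c = I_ij.\<close>
definition Xi :: "real \<Rightarrow> real \<Rightarrow> real \<Rightarrow> real \<Rightarrow> real \<Rightarrow> real \<Rightarrow> real" where
  "Xi ri rj rk a b c =
    (let p = cosh ri; q = cosh rj; r = cosh rk;
         x = q * r + a * sinh rj * sinh rk;
         y = r * p + b * sinh rk * sinh ri;
         z = p * q + c * sinh ri * sinh rj
     in p^2 * (1 - x^2) + q^2 * (1 - y^2) + r^2 * (1 - z^2)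
        + 2*p*q*(x*y - z) + 2*p*r*(x*z - y) + 2*q*r*(y*z - x))"

definition strict_tri :: "real \<Rightarrow> real \<Rightarrow> real \<Rightarrow> bool" where
  "strict_tri l1 l2 l3 \<longleftrightarrow> l1 < l2 + l3 \<and> l2 < l1 + l3 \<and> l3 < l1 + l2"

definition pdisk :: "complex set" where
  "pdisk = ball 0 1"

definition hdist :: "complex \<Rightarrow> complex \<Rightarrow> real" where
  "hdist z w = arcosh (1 + 2 * (cmod (z - w))^2 / ((1 - (cmod z)^2) * (1 - (cmod w)^2)))"

definition hcircle :: "complex \<Rightarrow> real \<Rightarrow> complex set" where
  "hcircle c \<rho> = {z \<in> pdisk. hdist c z = \<rho>}"

definition orth_circ :: "complex \<Rightarrow> real \<Rightarrow> complex \<Rightarrow> real \<Rightarrow> bool" where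
  "orth_circ o1 R1 o2 R2 \<longleftrightarrow> (cmod (o1 - o2))^2 = R1^2 + R2^2"

definition is_orthogonal_circle ::
  "complex \<Rightarrow> complex \<Rightarrow> complex \<Rightarrow> real \<Rightarrow> real \<Rightarrow> real \<Rightarrow> complex \<Rightarrow> real \<Rightarrow> bool" where
  "is_orthogonal_circle zi zj zk ri rj rk oc R \<longleftrightarrow> R > 0 \<and>
     (\<forall>a s. s > 0 \<and> sphere a s = hcircle zi ri \<longrightarrow> orth_circ oc R a s) \<and>
     (\<forall>a s. s > 0 \<and> sphere a s = hcircle zj rj \<longrightarrow> orth_circ oc R a s) \<and>
     (\<forall>a s. s > 0 \<and> sphere a s = hcircle zk rk \<longrightarrow> orth_circ oc R a s)"

text \<open>Triangulation data: faces F; for a face f, vertex n (n = 0,1,2) is fv f n and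
  the edge opposite to vertex n is fe f n.  (A Delta-complex triangulation of a
  marked surface gives such data.)\<close>
definition face_Xi :: "('f \<Rightarrow> nat \<Rightarrow> 'v) \<Rightarrow> ('f \<Rightarrow> nat \<Rightarrow> 'e) \<Rightarrow> ('e \<Rightarrow> real) \<Rightarrow> ('v \<Rightarrow> real) \<Rightarrow> 'f \<Rightarrow> real" where
  "face_Xi fv fe I r f = Xi (r (fv f 0)) (r (fv f 1)) (r (fv f 2)) (I (fe f 0)) (I (fe f 1)) (I (fe f 2))"

definition Xi_set :: "'f set \<Rightarrow> ('f \<Rightarrow> nat \<Rightarrow> 'v) \<Rightarrow> ('f \<Rightarrow> nat \<Rightarrow> 'e) \<Rightarrow> 'e set \<Rightarrow> 'v set
    \<Rightarrow> (('e \<Rightarrow> real) \<times> ('v \<Rightarrow> real)) set" where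
  "Xi_set F fv fe E V = {(I, r). (\<forall>e\<in>E. I e > 1) \<and> (\<forall>v\<in>V. r v > 0) \<and>
      (\<forall>f\<in>F. face_Xi fv fe I r f > 0)}"

definition Q_h :: "'f set \<Rightarrow> ('f \<Rightarrow> nat \<Rightarrow> 'v) \<Rightarrow> ('f \<Rightarrow> nat \<Rightarrow> 'e) \<Rightarrow> 'e set \<Rightarrow> 'v set
    \<Rightarrow> (('e \<Rightarrow> real) \<times> ('v \<Rightarrow> real)) set" where
  "Q_h F fv fe E V = {(I, r). (\<forall>e\<in>E. I e > 1) \<and> (\<forall>v\<in>V. r v > 0) \<and>
      (\<forall>f\<in>F. strict_tri (inv_len (r (fv f 0)) (r (fv f 1)) (I (fe f 2)))
                         (inv_len (r (fv f 1)) (r (fv f 2)) (I (fe f 0)))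
                         (inv_len (r (fv f 2)) (r (fv f 0)) (I (fe f 1))))}"

end

theory Submission
  imports Defs
begin


definition Dg :: "real \<Rightarrow> real \<Rightarrow> real \<Rightarrow> real" where
  "Dg x y z = 1 + 2*x*y*z - x^2 - y^2 - z^2"
definition Xq :: "real \<Rightarrow> real \<Rightarrow> real \<Rightarrow> real \<Rightarrow> real \<Rightarrow> real \<Rightarrow> real" where
  "Xq p q r x y z = p^2 * (1 - x^2) + q^2 * (1 - y^2) + r^2 * (1 - z^2)
        + 2*p*q*(x*y - z) + 2*p*r*(x*z - y) + 2*q*r*(y*z - x)"

lemma id1: fixes p q r x y z :: real
  shows "Dg x y z*(q^2+r^2-2*x*q*r) =
   Xq p q r x y z*(1-x^2) - (p*(1-x^2)+q*(x*y-z)+r*(x*z-y))^2"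
  unfolding Dg_def Xq_def by algebra

lemma D_pos:
  fixes p q r x y z :: real
  assumes "q \<ge> 1" "r \<ge> 1" "x > q*r" "Xq p q r x y z > 0"
  shows "Dg x y z > 0"
proof -
  have qr: "1*1 \<le> q*r" by (rule mult_mono) (use assms in auto)
  have "x > 1" using qr assms(3) by linarith
  hence "1 < x^2" by (simp add: one_less_power)
  hence x1: "1 - x^2 < 0" by linarith
  have "x*q*r > (q*r)*(q*r)" using assms qr by (simp add: mult.assoc mult_strict_right_mono)
  moreover have "q^2 + r^2 \<le> 2*(q*r)*(q*r)"
  proof -
    have "q^2 \<le> q^2*r^2" using assms by (simp add: power_increasing)
    moreover have "r^2 \<le> q^2*r^2" using assms by (simp add: power_increasing)
    ultimately show ?thesis by (simp add: power2_eq_square algebra_simps)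
  qed
  ultimately have N: "q^2+r^2-2*x*q*r < 0" by linarith
  have "Xq p q r x y z*(1-x^2) < 0" using x1 assms(4) by (simp add: mult_pos_neg)
  moreover have "(p*(1-x^2)+q*(x*y-z)+r*(x*z-y))^2 \<ge> 0" by simp
  ultimately have "Dg x y z*(q^2+r^2-2*x*q*r) < 0" using id1[of x y z q r p] by linarith
  with N show ?thesis by (simp add: mult_less_0_iff)
qed

lemma tri1:
  fixes X Y Z :: real
  assumes "X \<ge> 1" "Y \<ge> 1" "Z \<ge> 1" "Dg X Y Z > 0"
  shows "arcosh Z < arcosh X + arcosh Y"
proof -
  have e: "Dg X Y Z = (X^2-1)*(Y^2-1) - (Z - X*Y)^2" unfolding Dg_def by algebra
  have "(Z - X*Y)^2 < (X^2-1)*(Y^2-1)" using assms(4) e by linarith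
  hence "Z - X*Y < sqrt ((X^2-1)*(Y^2-1))"
    by (rule real_less_rsqrt)
  hence "Z < cosh (arcosh X + arcosh Y)"
    using assms by (simp add: cosh_add sinh_arcosh_real real_sqrt_mult)
  hence "arcosh Z < arcosh (cosh (arcosh X + arcosh Y))"
    using assms by (subst arcosh_less_iff_real) auto
  also have "\<dots> = arcosh X + arcosh Y" using assms by (simp add: arcosh_cosh_real)
  finally show ?thesis .
qed

lemma tri3:
  fixes X Y Z :: real
  assumes "X \<ge> 1" "Y \<ge> 1" "Z \<ge> 1" "Dg X Y Z > 0"
  shows "strict_tri (arcosh Z) (arcosh X) (arcosh Y)"
proof -
  have "Dg Y Z X > 0" "Dg Z X Y > 0" using assms(4) unfolding Dg_def by (simp_all add: algebra_simps)
  thus ?thesis using tri1[of X Y Z] tri1[of Y Z X] tri1[of Z X Y] assms unfolding strict_tri_def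
    by (simp add: add.commute)
qed


definition bet1 where "bet1 p q r x y z = p*(1-x^2) + q*(x*y-z) + r*(x*z-y)"
definition bet2 where "bet2 p q r x y z = p*(x*y-z) + q*(1-y^2) + r*(y*z-x)"
definition bet3 where "bet3 p q r x y z = p*(x*z-y) + q*(y*z-x) + r*(1-z^2)"

lemma P1: "bet1 p q r x y z*(-1) + bet2 p q r x y z*(-z) + bet3 p q r x y z*(-y) = - Dg x y z * p"
  unfolding bet1_def bet2_def bet3_def Dg_def by algebra
lemma P2: "bet1 p q r x y z*(-z) + bet2 p q r x y z*(-1) + bet3 p q r x y z*(-x) = - Dg x y z * q"
  unfolding bet1_def bet2_def bet3_def Dg_def by algebra
lemma P3: "bet1 p q r x y z*(-y) + bet2 p q r x y z*(-x) + bet3 p q r x y z*(-1) = - Dg x y z * r"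
  unfolding bet1_def bet2_def bet3_def Dg_def by algebra
lemma P4: "bet1 p q r x y z*p + bet2 p q r x y z*q + bet3 p q r x y z*r = Xq p q r x y z"
  unfolding bet1_def bet2_def bet3_def Xq_def by algebra

definition det3 :: "real \<Rightarrow> real \<Rightarrow> real \<Rightarrow> real \<Rightarrow> real \<Rightarrow> real \<Rightarrow> real \<Rightarrow> real \<Rightarrow> real \<Rightarrow> real" where
  "det3 a11 a12 a13 a21 a22 a23 a31 a32 a33 =
     a11*(a22*a33-a23*a32) - a12*(a21*a33-a23*a31) + a13*(a21*a32-a22*a31)"

lemma gram_det:
  fixes e1 e2 e3 f1 f2 f3 g1 g2 g3 :: real
  shows "det3 (f1*f1+g1*g1-e1*e1) (f1*f2+g1*g2-e1*e2) (f1*f3+g1*g3-e1*e3)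
              (f2*f1+g2*g1-e2*e1) (f2*f2+g2*g2-e2*e2) (f2*f3+g2*g3-e2*e3)
              (f3*f1+g3*g1-e3*e1) (f3*f2+g3*g2-e3*e2) (f3*f3+g3*g3-e3*e3)
       = - ((det3 e1 f1 g1 e2 f2 g2 e3 f3 g3)^2)"
  unfolding det3_def by algebra

lemma kernel:
  fixes e1 e2 e3 f1 f2 f3 g1 g2 g3 k0 k1 k2 :: real
  assumes "f1*k1+g1*k2-e1*k0 = 0" "f2*k1+g2*k2-e2*k0 = 0" "f3*k1+g3*k2-e3*k0 = 0"
  shows "det3 e1 f1 g1 e2 f2 g2 e3 f3 g3 * k0 = 0" "det3 e1 f1 g1 e2 f2 g2 e3 f3 g3 * k1 = 0"
        "det3 e1 f1 g1 e2 f2 g2 e3 f3 g3 * k2 = 0"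
  using assms unfolding det3_def by algebra+

lemma det_G: "det3 (-1) (-z) (-y) (-z) (-1) (-x) (-y) (-x) (-1) = - Dg x y z"
  unfolding det3_def Dg_def by algebra

lemma orth_id:
  fixes fY gY eY D f g e p h A B :: real
  assumes "A > 0" "B > 0" "f^2+g^2 = e^2-1" "h^2 = p^2-1" "B = e + p" "A = eY + D"
  shows "(fY/A - f/B)^2 + (gY/A - g/B)^2 - (fY^2+gY^2-eY^2+D^2)/A^2 - (h/B)^2
         = (2*eY*e - 2*D*p - 2*(fY*f+gY*g))/(A*B)"
proof -
  have "(fY/A - f/B)^2 + (gY/A - g/B)^2 - (fY^2+gY^2-eY^2+D^2)/A^2 - (h/B)^2
      = (eY^2-D^2)/A^2 - 2*(fY*f+gY*g)/(A*B) + (f^2+g^2-h^2)/B^2"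
    using assms(1,2) by (simp add: field_simps power2_eq_square)
  also have "f^2+g^2-h^2 = (e-p)*B" using assms(3,4,5) by (simp add: algebra_simps power2_eq_square)
  also have "eY^2 - D^2 = (eY - D)*A" using assms(6) by (simp add: algebra_simps power2_eq_square)
  also have "(eY - D)*A/A^2 - 2*(fY*f+gY*g)/(A*B) + (e-p)*B/B^2 = (eY - D)/A - 2*(fY*f+gY*g)/(A*B) + (e-p)/B"
    using assms(1,2) by (simp add: power2_eq_square)
  also have "\<dots> = ((eY - D)*B - 2*(fY*f+gY*g) + (e-p)*A)/(A*B)"
    using assms(1,2) by (simp add: field_simps)
  also have "(eY - D)*B - 2*(fY*f+gY*g) + (e-p)*A = 2*eY*e - 2*D*p - 2*(fY*f+gY*g)"
    using assms(5,6) by (simp add: algebra_simps)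
  finally show ?thesis .
qed


lemma id2: fixes p q r h1 h2 h3 a b c :: real
  assumes "h1^2 = p^2-1" "h2^2 = q^2-1" "h3^2 = r^2-1"
  shows "Dg (q*r + a*h2*h3) (r*p+b*h3*h1) (p*q+c*h1*h2) - Xq p q r (q*r + a*h2*h3) (r*p+b*h3*h1) (p*q+c*h1*h2)
     = h1^2*h2^2*h3^2*(a^2+b^2+c^2+2*a*b*c-1)"
  using assms unfolding Dg_def Xq_def by algebra

definition orc :: "real \<Rightarrow> real \<Rightarrow> real \<Rightarrow> real \<Rightarrow> real \<Rightarrow> real \<Rightarrow> real \<Rightarrow> real \<Rightarrow> bool" where
  "orc ka kb R e f g p h \<longleftrightarrow> (ka - f/(e+p))^2 + (kb - g/(e+p))^2 = R^2 + (h/(e+p))^2"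

lemma cs2: fixes ua ub va vb :: real
  shows "(ua * va + ub * vb)^2 \<le> (ua^2 + ub^2) * (va^2 + vb^2)"
proof -
  have "(ua^2 + ub^2) * (va^2 + vb^2) - (ua * va + ub * vb)^2 = (ua * vb - ub * va)^2" by algebra
  thus ?thesis using zero_le_power2[of "ua * vb - ub * va"] by linarith
qed

lemma kap_id: fixes c1 c2 R' ka kb R u w :: real
  shows "((c1^2+c2^2-R'^2) - (ka^2+kb^2-R^2)) - 2*((c1-ka)*u + (c2-kb)*w) =
     ((c1 - u)^2 + (c2 - w)^2 - R'^2) - ((ka - u)^2 + (kb - w)^2 - R^2)"
  by algebra

lemma canc: fixes B d1 d2 f g :: real
  shows "B \<noteq> 0 \<Longrightarrow> 2*(d1*(f/B) + d2*(g/B))*B = 2*(d1*f+d2*g)"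
  by (simp add: field_simps)

lemma core:
  fixes e1 e2 e3 f1 f2 f3 g1 g2 g3 p q r h1 h2 h3 a b c :: real
  assumes Ee: "f1^2+g1^2 = e1^2-1" "f2^2+g2^2 = e2^2-1" "f3^2+g3^2 = e3^2-1"
   and epos: "e1>0" "e2>0" "e3>0"
   and Lz: "f1*f2+g1*g2-e1*e2 = -(p*q + c*h1*h2)"
   and Lx: "f2*f3+g2*g3-e2*e3 = -(q*r + a*h2*h3)"
   and Ly: "f3*f1+g3*g1-e3*e1 = -(r*p + b*h3*h1)"
   and hp: "h1^2 = p^2-1" "h2^2 = q^2-1" "h3^2 = r^2-1" "h1>0" "h2>0" "h3>0" "p \<ge> 1" "q \<ge> 1" "r \<ge> 1"
   and abc: "a>1" "b>1" "c>1"
   and Xp: "Xq p q r (q*r + a*h2*h3) (r*p + b*h3*h1) (p*q + c*h1*h2) > 0"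
  shows "\<exists>ka kb R. R>0 \<and> sqrt (ka^2 + kb^2) + R < 1 \<and> orc ka kb R e1 f1 g1 p h1 \<and> orc ka kb R e2 f2 g2 q h2
     \<and> orc ka kb R e3 f3 g3 r h3 \<and>
     (\<forall>c1 c2 R'. R'>0 \<and> orc c1 c2 R' e1 f1 g1 p h1 \<and> orc c1 c2 R' e2 f2 g2 q h2
        \<and> orc c1 c2 R' e3 f3 g3 r h3 \<longrightarrow> c1=ka \<and> c2=kb \<and> R'=R)"
proof -
  define x where "x = q*r + a*h2*h3"
  define y where "y = r*p + b*h3*h1"
  define z where "z = p*q + c*h1*h2"
  define D where "D = Dg x y z"
  define X where "X = Xq p q r x y z"
  have Xp': "X > 0" using Xp unfolding X_def x_def y_def z_def .
  have "a*h2*h3 > 0" using abc hp by simp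
  hence "x > q*r" unfolding x_def by linarith
  hence Dp: "D > 0" unfolding D_def using D_pos[of q r x p y z] hp Xp' X_def by simp
  have "a^2 > 1" "b^2>1" "c^2>1" using abc by (simp_all add: one_less_power)
  moreover have "a*b*c > 0" using abc by simp
  ultimately have "a^2+b^2+c^2+2*a*b*c-1 > 0" by linarith
  moreover have "h1^2*h2^2*h3^2 > 0" using hp(4,5,6) by simp
  ultimately have "h1^2*h2^2*h3^2*(a^2+b^2+c^2+2*a*b*c-1) > 0" by (metis mult_pos_pos mult.commute)
  hence DX: "D - X > 0" using id2[OF hp(1,2,3), of a b c] unfolding D_def X_def x_def y_def z_def by simp
  define b1 where "b1 = bet1 p q r x y z"
  define b2 where "b2 = bet2 p q r x y z"
  define b3 where "b3 = bet3 p q r x y z"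
  define eY where "eY = b1*e1+b2*e2+b3*e3"
  define fY where "fY = b1*f1+b2*f2+b3*f3"
  define gY where "gY = b1*g1+b2*g2+b3*g3"
  have d11: "f1*f1+g1*g1-e1*e1 = -1" "f2*f2+g2*g2-e2*e2 = -1" "f3*f3+g3*g3-e3*e3 = -1"
    using Ee by (simp_all add: power2_eq_square)
  have d12: "f1*f2+g1*g2-e1*e2 = -z" "f2*f1+g2*g1-e2*e1 = -z" using Lz unfolding z_def by (simp_all add: mult.commute)
  have d23: "f2*f3+g2*g3-e2*e3 = -x" "f3*f2+g3*g2-e3*e2 = -x" using Lx unfolding x_def by (simp_all add: mult.commute)
  have d31: "f3*f1+g3*g1-e3*e1 = -y" "f1*f3+g1*g3-e1*e3 = -y" using Ly unfolding y_def by (simp_all add: mult.commute)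
  have F1: "fY*f1+gY*g1-eY*e1 = -D*p"
  proof -
    have "fY*f1+gY*g1-eY*e1 = b1*(f1*f1+g1*g1-e1*e1) + b2*(f2*f1+g2*g1-e2*e1) + b3*(f3*f1+g3*g1-e3*e1)"
      unfolding fY_def gY_def eY_def by (simp add: algebra_simps)
    also have "\<dots> = b1*(-1) + b2*(-z) + b3*(-y)" using d11 d12 d31 by simp
    also have "\<dots> = -D*p" unfolding b1_def b2_def b3_def D_def using P1 by simp
    finally show ?thesis .
  qed
  have F2: "fY*f2+gY*g2-eY*e2 = -D*q"
  proof -
    have "fY*f2+gY*g2-eY*e2 = b1*(f1*f2+g1*g2-e1*e2) + b2*(f2*f2+g2*g2-e2*e2) + b3*(f3*f2+g3*g2-e3*e2)"
      unfolding fY_def gY_def eY_def by (simp add: algebra_simps)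
    also have "\<dots> = b1*(-z) + b2*(-1) + b3*(-x)" using d11 d12 d23 by simp
    also have "\<dots> = -D*q" unfolding b1_def b2_def b3_def D_def using P2 by simp
    finally show ?thesis .
  qed
  have F3: "fY*f3+gY*g3-eY*e3 = -D*r"
  proof -
    have "fY*f3+gY*g3-eY*e3 = b1*(f1*f3+g1*g3-e1*e3) + b2*(f2*f3+g2*g3-e2*e3) + b3*(f3*f3+g3*g3-e3*e3)"
      unfolding fY_def gY_def eY_def by (simp add: algebra_simps)
    also have "\<dots> = b1*(-y) + b2*(-x) + b3*(-1)" using d11 d23 d31 by simp
    also have "\<dots> = -D*r" unfolding b1_def b2_def b3_def D_def using P3 by simp
    finally show ?thesis .
  qed
  have FF: "fY^2+gY^2-eY^2 = -D*X"
  proof -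
    have "fY^2+gY^2-eY^2 = b1*(fY*f1+gY*g1-eY*e1) + b2*(fY*f2+gY*g2-eY*e2) + b3*(fY*f3+gY*g3-eY*e3)"
      unfolding fY_def gY_def eY_def by (simp add: algebra_simps power2_eq_square)
    also have "\<dots> = -D*(b1*p+b2*q+b3*r)" unfolding F1 F2 F3 by (simp add: algebra_simps)
    also have "\<dots> = -D*X" unfolding b1_def b2_def b3_def X_def using P4 by simp
    finally show ?thesis .
  qed
  have DXp: "D*X > 0" using Dp Xp' by simp
  have lt: "fY^2+gY^2 < eY^2" using FF DXp by linarith
  have eYp: "eY > 0"
  proof (rule ccontr)
    assume "\<not> eY > 0"
    moreover have nn: "0 \<le> fY^2+gY^2" "0 \<le> f1^2+g1^2" by simp_all
    moreover have "eY \<noteq> 0"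
    proof
      assume "eY = 0"
      thus False using lt nn by simp
    qed
    ultimately have eYn: "eY < 0" by simp
    have "f1^2+g1^2 < e1^2" using Ee(1) by simp
    have pr: "(fY^2+gY^2)*(f1^2+g1^2) < eY^2*e1^2"
      using mult_strict_mono'[OF lt \<open>f1^2+g1^2 < e1^2\<close> nn] .
    have "(eY*e1)^2 = eY^2*e1^2" by (simp add: power_mult_distrib)
    hence "(fY*f1+gY*g1)^2 < (eY*e1)^2" using cs2[of fY f1 gY g1] pr by linarith
    hence "\<bar>fY*f1+gY*g1\<bar>^2 < \<bar>eY*e1\<bar>^2" by simp
    hence "\<bar>fY*f1+gY*g1\<bar> < \<bar>eY*e1\<bar>" by (rule power_less_imp_less_base) simp
    moreover have "\<bar>eY*e1\<bar> = -(eY*e1)" using eYn epos by (simp add: abs_mult)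
    ultimately have "fY*f1+gY*g1-eY*e1 > 0" by linarith
    moreover have "-D*p < 0" using Dp hp by simp
    ultimately show False using F1 by linarith
  qed
  define A where "A = eY + D"
  have Ap: "A > 0" using eYp Dp A_def by simp
  define ka where "ka = fY/A"
  define kb where "kb = gY/A"
  define R where "R = sqrt (D*(D-X))/A"
  have Rp: "R > 0" unfolding R_def using Ap Dp DX by simp
  have R2: "R^2 = (fY^2+gY^2-eY^2+D^2)/A^2"
  proof -
    have "D*(D-X) \<ge> 0" using Dp DX by simp
    hence "R^2 = D*(D-X)/A^2" unfolding R_def by (simp add: power_divide)
    also have "D*(D-X) = fY^2+gY^2-eY^2+D^2" using FF by (simp add: algebra_simps power2_eq_square)
    finally show ?thesis .
  qed
  have orth: "orc ka kb R e f g w h"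
    if "f^2+g^2 = e^2-1" "h^2 = w^2-1" "e > 0" "w \<ge> 1" "fY*f+gY*g-eY*e = -D*w" for e f g w h
  proof -
    have B: "e + w > 0" using that by simp
    have "(fY/A - f/(e+w))^2 + (gY/A - g/(e+w))^2 - (fY^2+gY^2-eY^2+D^2)/A^2 - (h/(e+w))^2
         = (2*eY*e - 2*D*w - 2*(fY*f+gY*g))/(A*(e+w))"
      by (rule orth_id) (use Ap B that A_def in auto)
    also have "2*eY*e - 2*D*w - 2*(fY*f+gY*g) = 0" using that(5) by simp
    finally show ?thesis unfolding orc_def ka_def kb_def R2 by simp
  qed
  have ka: "orc ka kb R e1 f1 g1 p h1" by (rule orth) (use Ee hp epos F1 in auto)
  have kb: "orc ka kb R e2 f2 g2 q h2" by (rule orth) (use Ee hp epos F2 in auto)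
  have o3: "orc ka kb R e3 f3 g3 r h3" by (rule orth) (use Ee hp epos F3 in auto)
  have inside: "sqrt (ka^2 + kb^2) + R < 1"
  proof -
    have "ka^2+ kb^2 = (fY^2+gY^2)/A^2" unfolding ka_def kb_def by (simp add: power_divide add_divide_distrib)
    hence "sqrt(ka^2+ kb^2) = sqrt(fY^2+gY^2)/A" using Ap by (simp add: real_sqrt_divide)
    moreover have "sqrt(fY^2+gY^2) < eY"
      using lt eYp by (metis real_less_rsqrt real_sqrt_abs abs_of_pos real_sqrt_less_iff)
    moreover have "sqrt (D*(D-X)) < D"
    proof -
      have "D*(D-X) < D^2" using DXp by (simp add: algebra_simps power2_eq_square)
      thus ?thesis using Dp by (metis real_sqrt_less_iff real_sqrt_abs abs_of_pos)
    qed
    ultimately have "sqrt(ka^2+ kb^2)+R < (eY + D)/A" unfolding R_def using Ap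
      by (simp add: add_divide_distrib[symmetric] divide_strict_right_mono)
    thus ?thesis using Ap A_def by simp
  qed
  have uniq: "c1=ka \<and> c2=kb \<and> R'=R"
    if R'p: "R'>0" and co: "orc c1 c2 R' e1 f1 g1 p h1" "orc c1 c2 R' e2 f2 g2 q h2" "orc c1 c2 R' e3 f3 g3 r h3"
    for c1 c2 R'
  proof -
    define d1 where "d1 = c1 - ka"
    define d2 where "d2 = c2 - kb"
    define \<kappa> where "\<kappa> = (c1^2+c2^2-R'^2) - (ka^2+ kb^2-R^2)"
    have lin: "2*(d1*f+d2*g) = \<kappa>*(e+w)"
      if "orc c1 c2 R' e f g w h" "orc ka kb R e f g w h" "e+w > 0" for e f g w h
    proof -
      have "(c1 - f/(e+w))^2 + (c2 - g/(e+w))^2 - R'^2 = (ka - f/(e+w))^2 + (kb - g/(e+w))^2 - R^2"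
        using that unfolding orc_def by simp
      moreover have "\<kappa> - 2*(d1*(f/(e+w)) + d2*(g/(e+w))) =
        ((c1 - f/(e+w))^2 + (c2 - g/(e+w))^2 - R'^2) - ((ka - f/(e+w))^2 + (kb - g/(e+w))^2 - R^2)"
        unfolding \<kappa>_def d1_def d2_def by (rule kap_id)
      ultimately have "\<kappa> = 2*(d1*(f/(e+w)) + d2*(g/(e+w)))" by linarith
      hence "\<kappa>*(e+w) = 2*(d1*(f/(e+w)) + d2*(g/(e+w)))*(e+w)" by simp
      also have "\<dots> = 2*(d1*f+d2*g)" using that(3) by (intro canc) simp
      finally show ?thesis by simp
    qed
    have l1: "2*(d1*f1+d2*g1) = \<kappa>*(e1+p)" by (rule lin[OF co(1) ka]) (use epos hp in auto)
    have l2: "2*(d1*f2+d2*g2) = \<kappa>*(e2+q)" by (rule lin[OF co(2) kb]) (use epos hp in auto)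
    have l3: "2*(d1*f3+d2*g3) = \<kappa>*(e3+r)" by (rule lin[OF co(3) o3]) (use epos hp in auto)
    define \<mu> where "\<mu> = -\<kappa>/(2*D)"
    have \<mu>D: "\<mu>*D = -\<kappa>/2" unfolding \<mu>_def using Dp by simp
    define eQ where "eQ = \<kappa>/2 - \<mu>*eY"
    define fQ where "fQ = d1 - \<mu>*fY"
    define gQ where "gQ = d2 - \<mu>*gY"
    have ker: "f*fQ+g*gQ-e*eQ = 0"
      if "2*(d1*f+d2*g) = \<kappa>*(e+w)" "fY*f+gY*g-eY*e = -D*w" for e f g w
    proof -
      have "f*fQ+g*gQ-e*eQ = (d1*f+d2*g) - \<kappa>*e/2 - \<mu>*(fY*f+gY*g-eY*e)"
        unfolding fQ_def gQ_def eQ_def by (simp add: algebra_simps)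
      also have "\<dots> = \<kappa>*(e+w)/2 - \<kappa>*e/2 - \<mu>*(-D*w)"
      proof -
        have h1: "d1*f+d2*g = \<kappa>*(e+w)/2" using that(1) by (simp add: eq_divide_eq algebra_simps)
        show ?thesis unfolding h1 that(2) ..
      qed
      also have "\<dots> = \<kappa>*w/2 + (\<mu>*D)*w" by (simp add: field_simps)
      also have "\<dots> = 0" unfolding \<mu>D by (simp add: field_simps)
      finally show ?thesis .
    qed
    have k1: "f1*fQ+g1*gQ-e1*eQ = 0" by (rule ker[OF l1 F1])
    have k2: "f2*fQ+g2*gQ-e2*eQ = 0" by (rule ker[OF l2 F2])
    have k3: "f3*fQ+g3*gQ-e3*eQ = 0" by (rule ker[OF l3 F3])
    define dM where "dM = det3 e1 f1 g1 e2 f2 g2 e3 f3 g3"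
    have "- (dM^2) = det3 (-1) (-z) (-y) (-z) (-1) (-x) (-y) (-x) (-1)"
      using gram_det[of f1 g1 e1 f2 g2 e2 f3 g3 e3] d11 d12 d23 d31 unfolding dM_def by simp
    hence "dM^2 = D" unfolding det_G D_def by simp
    hence dM0: "dM \<noteq> 0" using Dp by auto
    have "dM*eQ = 0" "dM*fQ = 0" "dM*gQ = 0" using kernel[OF k1 k2 k3] unfolding dM_def by auto
    hence Q0: "eQ = 0" "fQ = 0" "gQ = 0" using dM0 by auto
    have "\<kappa> = 0"
    proof (rule ccontr)
      assume k: "\<kappa> \<noteq> 0"
      have "\<kappa>/2 = \<mu>*eY" using Q0 unfolding eQ_def by simp
      hence "\<kappa>*D = \<kappa>*(-eY)" unfolding \<mu>_def using Dp by (simp add: field_simps)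
      hence "\<kappa>*(D + eY) = 0" by (simp add: algebra_simps)
      hence "D + eY = 0" using k by simp
      hence "D = -eY" by simp
      thus False using Dp eYp by simp
    qed
    hence "\<mu> = 0" unfolding \<mu>_def by simp
    hence "d1 = 0" "d2 = 0" using Q0 unfolding fQ_def gQ_def by auto
    hence c: "c1 = ka" "c2 = kb" unfolding d1_def d2_def by auto
    have "R'^2 = R^2" using co(1) ka unfolding orc_def c by simp
    hence "R' = R" using R'p Rp by (simp add: power2_eq_iff)
    thus ?thesis using c by simp
  qed
  show ?thesis using Rp inside ka kb o3 uniq by blast
qed


lemma cross_real:
  fixes z1 z2 w1 w2 n1 n2 :: real
  assumes "n1 = 1 - z1^2 - z2^2" "n2 = 1 - w1^2 - w2^2" "n1 \<noteq> 0" "n2 \<noteq> 0"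
  shows "(2*z1/n1)*(2*w1/n2) + (2*z2/n1)*(2*w2/n2) - ((1+z1^2+z2^2)/n1)*((1+w1^2+w2^2)/n2)
       = -(1 + 2*((z1-w1)^2+(z2-w2)^2)/(n1*n2))"
proof -
  have l: "(2*z1/n1)*(2*w1/n2) + (2*z2/n1)*(2*w2/n2) - ((1+z1^2+z2^2)/n1)*((1+w1^2+w2^2)/n2)
      = (4*(z1*w1+z2*w2) - (1+z1^2+z2^2)*(1+w1^2+w2^2))/(n1*n2)"
    using assms(3,4) by (simp add: field_simps)
  have r: "-(1 + 2*((z1-w1)^2+(z2-w2)^2)/(n1*n2)) = -(n1*n2 + 2*((z1-w1)^2+(z2-w2)^2))/(n1*n2)"
    using assms(3,4) by (simp add: field_simps)
  have "4*(z1*w1+z2*w2) - (1+z1^2+z2^2)*(1+w1^2+w2^2) = -(n1*n2 + 2*((z1-w1)^2+(z2-w2)^2))"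
    unfolding assms(1,2) by algebra
  thus ?thesis unfolding l r by simp
qed

lemma self_real:
  fixes z1 z2 n1 :: real
  assumes "n1 = 1 - z1^2 - z2^2" "n1 \<noteq> 0"
  shows "(2*z1/n1)^2 + (2*z2/n1)^2 = ((1+z1^2+z2^2)/n1)^2 - 1"
proof -
  have "(2*z1/n1)^2 + (2*z2/n1)^2 = (4*z1^2+4*z2^2)/n1^2" by (simp add: power_divide power_mult_distrib add_divide_distrib)
  also have "4*z1^2+4*z2^2 = (1+z1^2+z2^2)^2 - n1^2" unfolding assms(1) by algebra
  also have "((1+z1^2+z2^2)^2 - n1^2)/n1^2 = ((1+z1^2+z2^2)/n1)^2 - 1"
    using assms(2) by (simp add: power_divide diff_divide_distrib)
  finally show ?thesis .
qed

lemma sph_real: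
  fixes z1 z2 w1 w2 n A h S :: real
  assumes "n = 1 - z1^2 - z2^2" "A*n = 1 + z1^2 + z2^2 + h*n" "S^2 = h^2 - 1" "n \<noteq> 0" "A \<noteq> 0"
  shows "(w1 - 2*z1/(n*A))^2 + (w2 - 2*z2/(n*A))^2 - (S/A)^2
       = -((h-1)*n*(1-w1^2-w2^2) - 2*((z1-w1)^2+(z2-w2)^2))/(n*A)"
proof -
  have l: "(w1 - 2*z1/(n*A))^2 + (w2 - 2*z2/(n*A))^2 - (S/A)^2
     = ((w1*n*A - 2*z1)^2 + (w2*n*A - 2*z2)^2 - S^2*n^2)/(n*A)^2"
    using assms(4,5) by (simp add: field_simps power2_eq_square)
  have r: "-((h-1)*n*(1-w1^2-w2^2) - 2*((z1-w1)^2+(z2-w2)^2))/(n*A)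
     = -((h-1)*n*(1-w1^2-w2^2) - 2*((z1-w1)^2+(z2-w2)^2))*(n*A)/(n*A)^2"
    using assms(4,5) by (simp add: power2_eq_square)
  have "(w1*n*A - 2*z1)^2 + (w2*n*A - 2*z2)^2 - S^2*n^2
      = -((h-1)*n*(1-w1^2-w2^2) - 2*((z1-w1)^2+(z2-w2)^2))*(n*A)"
    using assms(1,2,3) by algebra
  thus ?thesis unfolding l r by simp
qed


definition Ec :: "complex \<Rightarrow> real" where "Ec z = (1 + (cmod z)^2)/(1 - (cmod z)^2)"
definition PR :: "complex \<Rightarrow> real" where "PR z = 2*Re z/(1 - (cmod z)^2)"
definition PI :: "complex \<Rightarrow> real" where "PI z = 2*Im z/(1 - (cmod z)^2)"

lemma disk_n: "z \<in> pdisk \<Longrightarrow> 1 - (cmod z)^2 > 0"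
  unfolding pdisk_def by (simp add: abs_square_less_1)

lemma nform: "1 - (cmod z)^2 = 1 - (Re z)^2 - (Im z)^2"
  by (simp add: cmod_power2)

lemma self_c:
  assumes "z \<in> pdisk"
  shows "PR z^2 + PI z^2 = Ec z^2 - 1" "Ec z > 0"
proof -
  have n: "1 - (cmod z)^2 > 0" using disk_n[OF assms] .
  show "PR z^2 + PI z^2 = Ec z^2 - 1"
    using self_real[OF nform[of z]] n unfolding PR_def PI_def Ec_def by (simp add: cmod_power2)
  show "Ec z > 0" unfolding Ec_def using n by (simp add: add_pos_nonneg)
qed

lemma arg_ge1:
  assumes "z \<in> pdisk" "w \<in> pdisk"
  shows "1 + 2*(cmod (z-w))^2/((1-(cmod z)^2)*(1-(cmod w)^2)) \<ge> 1"
  using disk_n[OF assms(1)] disk_n[OF assms(2)] by simp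

lemma cosh_hd:
  assumes "z \<in> pdisk" "w \<in> pdisk"
  shows "cosh (hdist z w) = 1 + 2*(cmod (z-w))^2/((1-(cmod z)^2)*(1-(cmod w)^2))"
  unfolding hdist_def using arg_ge1[OF assms] by simp

lemma cross_c:
  assumes "z \<in> pdisk" "w \<in> pdisk"
  shows "PR z*PR w + PI z*PI w - Ec z*Ec w = - cosh (hdist z w)"
proof -
  have n1: "1 - (cmod z)^2 \<noteq> 0" "1 - (cmod w)^2 \<noteq> 0" using disk_n[OF assms(1)] disk_n[OF assms(2)] by auto
  have e: "(cmod (z-w))^2 = (Re z - Re w)^2 + (Im z - Im w)^2" by (simp add: cmod_power2)
  show ?thesis
    using cross_real[OF nform[of z] nform[of w] n1] unfolding PR_def PI_def Ec_def cosh_hd[OF assms] e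
    by (simp add: cmod_power2 add.assoc)
qed

lemma hc:
  assumes z: "z \<in> pdisk" and rho: "\<rho> > 0"
  shows "hcircle z \<rho> = sphere (Complex (PR z/(Ec z + cosh \<rho>)) (PI z/(Ec z + cosh \<rho>))) (sinh \<rho>/(Ec z + cosh \<rho>))"
proof -
  define n where "n = 1 - (cmod z)^2"
  define h where "h = cosh \<rho>"
  define S where "S = sinh \<rho>"
  define A where "A = Ec z + h"
  define ctr where "ctr = Complex (PR z/A) (PI z/A)"
  have np: "n > 0" unfolding n_def using disk_n[OF z] .
  have Ep: "Ec z > 0" using self_c[OF z] by simp
  have h1: "h \<ge> 1" unfolding h_def by (rule cosh_real_ge_1)
  have Ap: "A > 0" unfolding A_def using Ep h1 by simp
  have Sp: "S > 0" unfolding S_def using rho by simp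
  have S2: "S^2 = h^2 - 1" unfolding S_def h_def by (simp add: cosh_square_eq)
  have An: "A*n = 1 + (Re z)^2 + (Im z)^2 + h*n"
    unfolding A_def Ec_def n_def using np[unfolded n_def] by (simp add: field_simps cmod_power2)
  have nf: "n = 1 - (Re z)^2 - (Im z)^2" unfolding n_def by (rule nform)
  have pra: "PR z/A = 2*Re z/(n*A)" "PI z/A = 2*Im z/(n*A)" unfolding PR_def PI_def n_def by simp_all
  have key: "(Re w - PR z/A)^2 + (Im w - PI z/A)^2 - (S/A)^2
       = -((h-1)*n*(1-(Re w)^2-(Im w)^2) - 2*((Re z-Re w)^2+(Im z-Im w)^2))/(n*A)" for w
    unfolding pra by (rule sph_real[OF nf An S2]) (use np Ap in auto)
  have dsq: "(cmod (ctr - w))^2 = (Re w - PR z/A)^2 + (Im w - PI z/A)^2" for w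
    unfolding ctr_def by (simp add: cmod_power2 power2_commute)
  have hd_iff: "hdist z w = \<rho> \<longleftrightarrow> (h-1)*n*(1-(Re w)^2-(Im w)^2) = 2*((Re z-Re w)^2+(Im z-Im w)^2)"
    if w: "w \<in> pdisk" for w
  proof -
    have nw: "1 - (cmod w)^2 > 0" using disk_n[OF w] .
    have "hdist z w = \<rho> \<longleftrightarrow> cosh (hdist z w) = h"
    proof
      assume "cosh (hdist z w) = h"
      hence "hdist z w = arcosh (cosh \<rho>)" unfolding hdist_def h_def
        using arg_ge1[OF z w] by (metis cosh_hd[OF z w] hdist_def)
      thus "hdist z w = \<rho>" using rho by (simp add: arcosh_cosh_real)
    qed (simp add: h_def)
    also have "\<dots> \<longleftrightarrow> 2*(cmod (z-w))^2/(n*(1-(cmod w)^2)) = h - 1"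
      unfolding cosh_hd[OF z w] n_def by linarith
    also have "\<dots> \<longleftrightarrow> 2*(cmod (z-w))^2 = (h-1)*(n*(1-(cmod w)^2))"
      using np nw by (simp add: divide_eq_eq)
    also have "\<dots> \<longleftrightarrow> (h-1)*n*(1-(Re w)^2-(Im w)^2) = 2*((Re z-Re w)^2+(Im z-Im w)^2)"
      by (simp add: cmod_power2 nform mult.assoc eq_commute diff_diff_eq)
    finally show ?thesis .
  qed
  show ?thesis
  proof (intro equalityI subsetI)
    fix w assume "w \<in> hcircle z \<rho>"
    hence w: "w \<in> pdisk" and hw: "hdist z w = \<rho>" unfolding hcircle_def by auto
    have "(cmod (ctr - w))^2 = (S/A)^2" using key[of w] hd_iff[OF w] hw dsq[of w] by simp
    hence "cmod (ctr - w) = S/A" using Sp Ap by (simp add: power2_eq_iff_nonneg)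
    thus "w \<in> sphere (Complex (PR z/(Ec z + cosh \<rho>)) (PI z/(Ec z + cosh \<rho>))) (sinh \<rho>/(Ec z + cosh \<rho>))"
      unfolding ctr_def A_def h_def S_def by (simp add: dist_norm)
  next
    fix w assume "w \<in> sphere (Complex (PR z/(Ec z + cosh \<rho>)) (PI z/(Ec z + cosh \<rho>))) (sinh \<rho>/(Ec z + cosh \<rho>))"
    hence cw: "cmod (ctr - w) = S/A" unfolding ctr_def A_def h_def S_def by (simp add: dist_norm)
    have "(cmod ctr)^2 = (PR z^2 + PI z^2)/A^2" unfolding ctr_def by (simp add: cmod_power2 power_divide add_divide_distrib)
    also have "\<dots> < (Ec z)^2/A^2" using self_c[OF z] Ap by (simp add: divide_strict_right_mono)
    finally have "(cmod ctr)^2 < (Ec z/A)^2" by (simp add: power_divide)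
    hence c1: "cmod ctr < Ec z/A" by (rule power_less_imp_less_base) (use Ep Ap in simp)
    have "S < h" unfolding S_def h_def by (rule sinh_less_cosh_real)
    hence "S/A < h/A" using Ap by (simp add: divide_strict_right_mono)
    moreover have "cmod w \<le> cmod ctr + cmod (ctr - w)" using norm_triangle_sub[of w ctr] by (simp add: norm_minus_commute)
    ultimately have "cmod w < Ec z/A + h/A" using c1 cw by linarith
    also have "\<dots> = 1" unfolding A_def using Ap A_def by (simp add: add_divide_distrib[symmetric])
    finally have w: "w \<in> pdisk" unfolding pdisk_def by simp
    have "(cmod (ctr - w))^2 = (S/A)^2" using cw by simp
    hence "-((h-1)*n*(1-(Re w)^2-(Im w)^2) - 2*((Re z-Re w)^2+(Im z-Im w)^2))/(n*A) = 0"
      using key[of w] dsq[of w] by simp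
    hence "(h-1)*n*(1-(Re w)^2-(Im w)^2) = 2*((Re z-Re w)^2+(Im z-Im w)^2)" using np Ap by simp
    hence "hdist z w = \<rho>" using hd_iff[OF w] by simp
    thus "w \<in> hcircle z \<rho>" unfolding hcircle_def using w by simp
  qed
qed

lemma sphere_uniq:
  fixes a a' :: complex
  assumes "s > 0" "s' > 0" "sphere a s = sphere a' s'"
  shows "a = a' \<and> s = s'"
proof -
  have pl: "(cmod (u + of_real t))^2 + (cmod (u - of_real t))^2 = 2*(cmod u)^2 + 2*t^2" for u t
    unfolding cmod_power2 by (simp add: power2_eq_square algebra_simps)
  have one: "(cmod (a' - a))^2 + s'^2 = s^2" if "s > 0" "s' > 0" "sphere a s = sphere a' s'" for a a' :: complex and s s'
  proof -
    have "a' + of_real s' \<in> sphere a' s'" "a' - of_real s' \<in> sphere a' s'" using that by (simp_all add: dist_norm)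
    hence "a' + of_real s' \<in> sphere a s" "a' - of_real s' \<in> sphere a s" using that by auto
    hence "cmod (a' - a + of_real s') = s" "cmod (a' - a - of_real s') = s"
      by (simp_all add: dist_norm norm_minus_commute algebra_simps)
    thus ?thesis using pl[of "a' - a" s'] by simp
  qed
  have e1: "(cmod (a - a'))^2 + s'^2 = s^2" using one[of s s' a a'] assms by (simp add: norm_minus_commute)
  have e2: "(cmod (a - a'))^2 + s^2 = s'^2" using one[of s' s a' a] assms by simp
  have "(cmod (a - a'))^2 = 0" using e1 e2 by linarith
  hence "a = a'" by simp
  moreover have "s^2 = s'^2" using e1 calculation by simp
  ultimately show ?thesis using assms by (simp add: power2_eq_iff_nonneg)
qed


lemma Xi_Xq: "Xi ri rj rk a b c = Xq (cosh ri) (cosh rj) (cosh rk)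
   (cosh rj * cosh rk + a * sinh rj * sinh rk) (cosh rk * cosh ri + b * sinh rk * sinh ri)
   (cosh ri * cosh rj + c * sinh ri * sinh rj)"
  unfolding Xi_def Xq_def Let_def by simp

lemma len_ge: "r1 > 0 \<Longrightarrow> r2 > 0 \<Longrightarrow> (I::real) > 1 \<Longrightarrow> cosh r1 * cosh r2 + I * sinh r1 * sinh r2 > cosh r1 * cosh r2"
proof -
  assume h: "r1 > 0" "r2 > 0" "(I::real) > 1"
  have "0 < I * sinh r1 * sinh r2" using h by (intro mult_pos_pos) auto
  thus ?thesis by simp
qed

lemma cc_ge: "cosh r1 * cosh r2 \<ge> (1::real)"
proof -
  have "1*1 \<le> cosh r1 * cosh r2" by (rule mult_mono) (auto simp: cosh_real_ge_1)
  thus ?thesis by simp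
qed

lemma face_tri:
  assumes "ri > 0" "rj > 0" "rk > 0" "a > 1" "b > 1" "c > 1" "Xi ri rj rk a b c > 0"
  shows "strict_tri (inv_len ri rj c) (inv_len rj rk a) (inv_len rk ri b)"
proof -
  define x where "x = cosh rj * cosh rk + a * sinh rj * sinh rk"
  define y where "y = cosh rk * cosh ri + b * sinh rk * sinh ri"
  define z where "z = cosh ri * cosh rj + c * sinh ri * sinh rj"
  have xg: "x > cosh rj * cosh rk" unfolding x_def using len_ge assms by simp
  have yg: "y > cosh rk * cosh ri" unfolding y_def using len_ge assms by simp
  have zg: "z > cosh ri * cosh rj" unfolding z_def using len_ge assms by simp
  have x1: "x \<ge> 1" using xg cc_ge[of rj rk] by linarith
  have y1: "y \<ge> 1" using yg cc_ge[of rk ri] by linarith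
  have z1: "z \<ge> 1" using zg cc_ge[of ri rj] by linarith
  have "Dg x y z > 0"
    by (rule D_pos[of "cosh rj" "cosh rk" x "cosh ri"]) (use xg assms(7) in \<open>auto simp: cosh_real_ge_1 Xi_Xq x_def y_def z_def\<close>)
  hence "strict_tri (arcosh z) (arcosh x) (arcosh y)" using tri3 x1 y1 z1 by blast
  thus ?thesis unfolding inv_len_def x_def y_def z_def .
qed

lemma orc_orth: "orc (Re oc) (Im oc) R e f g p h \<longleftrightarrow> orth_circ oc R (Complex (f/(e+p)) (g/(e+p))) (h/(e+p))"
  unfolding orc_def orth_circ_def by (simp add: cmod_power2)

lemma cosh_len: "r1 > 0 \<Longrightarrow> r2 > 0 \<Longrightarrow> I > 1 \<Longrightarrow> cosh (inv_len r1 r2 I) = cosh r1 * cosh r2 + I * sinh r1 * sinh r2"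
proof -
  assume h: "r1 > 0" "r2 > 0" "I > 1"
  have "1 \<le> cosh r1 * cosh r2 + I * sinh r1 * sinh r2" using len_ge[OF h] cc_ge[of r1 r2] by linarith
  thus ?thesis unfolding inv_len_def by simp
qed

lemma face_orth:
  assumes pos: "ri > 0" "rj > 0" "rk > 0" "a > 1" "b > 1" "c > 1" "Xi ri rj rk a b c > 0"
    and zs: "zi \<in> pdisk" "zj \<in> pdisk" "zk \<in> pdisk"
    and hd: "hdist zi zj = inv_len ri rj c" "hdist zj zk = inv_len rj rk a" "hdist zk zi = inv_len rk ri b"
  shows "(\<exists>oc R. is_orthogonal_circle zi zj zk ri rj rk oc R) \<and>
         (\<forall>oc R. is_orthogonal_circle zi zj zk ri rj rk oc R \<longrightarrow> sphere oc R \<subseteq> pdisk)"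
proof -
  have Lz: "PR zi*PR zj+PI zi*PI zj-Ec zi*Ec zj = -(cosh ri*cosh rj + c* sinh ri* sinh rj)"
    using cross_c[OF zs(1,2)] hd(1) cosh_len[of ri rj c] pos by simp
  have Lx: "PR zj*PR zk+PI zj*PI zk-Ec zj*Ec zk = -(cosh rj*cosh rk + a* sinh rj* sinh rk)"
    using cross_c[OF zs(2,3)] hd(2) cosh_len[of rj rk a] pos by simp
  have Ly: "PR zk*PR zi+PI zk*PI zi-Ec zk*Ec zi = -(cosh rk*cosh ri + b* sinh rk* sinh ri)"
    using cross_c[OF zs(3,1)] hd(3) cosh_len[of rk ri b] pos by simp
  have Xp: "Xq (cosh ri) (cosh rj) (cosh rk) (cosh rj*cosh rk + a* sinh rj* sinh rk)
      (cosh rk*cosh ri + b* sinh rk* sinh ri) (cosh ri*cosh rj + c* sinh ri* sinh rj) > 0"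
    using pos(7) unfolding Xi_Xq .
  have hsq: "sinh t^2 = cosh t^2 - 1" for t :: real by (simp add: cosh_square_eq)
  have sh: "sinh ri > 0" "sinh rj > 0" "sinh rk > 0" using pos by auto
  have C: "\<exists>ka kb R. R>0 \<and> sqrt (ka^2 + kb^2) + R < 1 \<and> orc ka kb R (Ec zi) (PR zi) (PI zi) (cosh ri) (sinh ri)
     \<and> orc ka kb R (Ec zj) (PR zj) (PI zj) (cosh rj) (sinh rj)
     \<and> orc ka kb R (Ec zk) (PR zk) (PI zk) (cosh rk) (sinh rk) \<and>
     (\<forall>c1 c2 R'. R'>0 \<and> orc c1 c2 R' (Ec zi) (PR zi) (PI zi) (cosh ri) (sinh ri)
        \<and> orc c1 c2 R' (Ec zj) (PR zj) (PI zj) (cosh rj) (sinh rj)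
        \<and> orc c1 c2 R' (Ec zk) (PR zk) (PI zk) (cosh rk) (sinh rk) \<longrightarrow> c1=ka \<and> c2=kb \<and> R'=R)"
    by (rule core[OF self_c(1)[OF zs(1)] self_c(1)[OF zs(2)] self_c(1)[OF zs(3)]
        self_c(2)[OF zs(1)] self_c(2)[OF zs(2)] self_c(2)[OF zs(3)] Lz Lx Ly
        hsq hsq hsq sh cosh_real_ge_1 cosh_real_ge_1 cosh_real_ge_1 pos(4,5,6) Xp])
  then obtain ka kb R where R: "R > 0" and ins: "sqrt (ka^2 + kb^2) + R < 1"
    and oi: "orc ka kb R (Ec zi) (PR zi) (PI zi) (cosh ri) (sinh ri)"
    and oj: "orc ka kb R (Ec zj) (PR zj) (PI zj) (cosh rj) (sinh rj)"
    and ok: "orc ka kb R (Ec zk) (PR zk) (PI zk) (cosh rk) (sinh rk)"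
    and un: "\<forall>c1 c2 R'. R'>0 \<and> orc c1 c2 R' (Ec zi) (PR zi) (PI zi) (cosh ri) (sinh ri)
        \<and> orc c1 c2 R' (Ec zj) (PR zj) (PI zj) (cosh rj) (sinh rj)
        \<and> orc c1 c2 R' (Ec zk) (PR zk) (PI zk) (cosh rk) (sinh rk) \<longrightarrow> c1=ka \<and> c2=kb \<and> R'=R"
    by blast
  define ctr where "ctr z t = Complex (PR z/(Ec z + cosh t)) (PI z/(Ec z + cosh t))" for z t
  define rad where "rad z t = sinh t/(Ec z + cosh t)" for z t
  have radp: "rad z t > 0" if "z \<in> pdisk" "t > 0" for z t
    unfolding rad_def using self_c(2)[OF that(1)] that(2) by (simp add: add_pos_pos)
  have hcs: "hcircle z t = sphere (ctr z t) (rad z t)" if "z \<in> pdisk" "t > 0" for z t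
    unfolding ctr_def rad_def by (rule hc[OF that])
  have uq: "a' = ctr z t \<and> s' = rad z t" if "z \<in> pdisk" "t > 0" "s' > 0" "sphere a' s' = hcircle z t" for z t a' s'
  proof -
    have "sphere a' s' = sphere (ctr z t) (rad z t)" using that(4) hcs[OF that(1,2)] by simp
    thus ?thesis using sphere_uniq[of s' "rad z t" a' "ctr z t"] that(3) radp[OF that(1,2)] by blast
  qed
  have oo: "orc (Re oc) (Im oc) R' (Ec z) (PR z) (PI z) (cosh t) (sinh t) \<longleftrightarrow> orth_circ oc R' (ctr z t) (rad z t)" for oc R' z t
    unfolding ctr_def rad_def by (rule orc_orth)
  have ex: "is_orthogonal_circle zi zj zk ri rj rk (Complex ka kb) R"
    unfolding is_orthogonal_circle_def
  proof (intro conjI allI impI)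
    show "R > 0" by (rule R)
    fix a' s' assume "0 < s' \<and> sphere a' s' = hcircle zi ri"
    hence "a' = ctr zi ri \<and> s' = rad zi ri" using uq[OF zs(1) pos(1)] by blast
    thus "orth_circ (Complex ka kb) R a' s'" using oo[of "Complex ka kb" R zi ri] oi by simp
  next
    fix a' s' assume "0 < s' \<and> sphere a' s' = hcircle zj rj"
    hence "a' = ctr zj rj \<and> s' = rad zj rj" using uq[OF zs(2) pos(2)] by blast
    thus "orth_circ (Complex ka kb) R a' s'" using oo[of "Complex ka kb" R zj rj] oj by simp
  next
    fix a' s' assume "0 < s' \<and> sphere a' s' = hcircle zk rk"
    hence "a' = ctr zk rk \<and> s' = rad zk rk" using uq[OF zs(3) pos(3)] by blast
    thus "orth_circ (Complex ka kb) R a' s'" using oo[of "Complex ka kb" R zk rk] ok by simp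
  qed
  have all: "sphere oc R' \<subseteq> pdisk" if "is_orthogonal_circle zi zj zk ri rj rk oc R'" for oc R'
  proof -
    have R'p: "R' > 0" using that unfolding is_orthogonal_circle_def by simp
    have io: "\<forall>a s. s > 0 \<and> sphere a s = hcircle zi ri \<longrightarrow> orth_circ oc R' a s"
         "\<forall>a s. s > 0 \<and> sphere a s = hcircle zj rj \<longrightarrow> orth_circ oc R' a s"
         "\<forall>a s. s > 0 \<and> sphere a s = hcircle zk rk \<longrightarrow> orth_circ oc R' a s"
      using that unfolding is_orthogonal_circle_def by blast+
    have "orth_circ oc R' (ctr zi ri) (rad zi ri)"
      using io(1) radp[OF zs(1) pos(1)] hcs[OF zs(1) pos(1)] by simp
    moreover have "orth_circ oc R' (ctr zj rj) (rad zj rj)"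
      using io(2) radp[OF zs(2) pos(2)] hcs[OF zs(2) pos(2)] by simp
    moreover have "orth_circ oc R' (ctr zk rk) (rad zk rk)"
      using io(3) radp[OF zs(3) pos(3)] hcs[OF zs(3) pos(3)] by simp
    ultimately have "orc (Re oc) (Im oc) R' (Ec zi) (PR zi) (PI zi) (cosh ri) (sinh ri)"
      "orc (Re oc) (Im oc) R' (Ec zj) (PR zj) (PI zj) (cosh rj) (sinh rj)"
      "orc (Re oc) (Im oc) R' (Ec zk) (PR zk) (PI zk) (cosh rk) (sinh rk)"
      unfolding oo by simp_all
    hence "Re oc = ka \<and> Im oc = kb \<and> R' = R" using un R'p by blast
    hence c: "cmod oc + R' < 1" using ins by (simp add: cmod_def)
    show ?thesis
    proof
      fix w assume "w \<in> sphere oc R'"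
      hence "cmod (oc - w) = R'" by (simp add: dist_norm)
      moreover have "cmod w \<le> cmod oc + cmod (oc - w)" using norm_triangle_sub[of w oc] by (simp add: norm_minus_commute)
      ultimately show "w \<in> pdisk" using c unfolding pdisk_def by simp
    qed
  qed
  show ?thesis using ex all by blast
qed

theorem mainTheorem3:
  fixes F :: "'f set" and fv :: "'f \<Rightarrow> nat \<Rightarrow> 'v" and fe :: "'f \<Rightarrow> nat \<Rightarrow> 'e"
    and E :: "'e set" and V :: "'v set"
  assumes "\<forall>f\<in>F. (\<forall>n<3. fv f n \<in> V \<and> fe f n \<in> E)"
  shows "(\<forall>ri rj rk a b c :: real.
            ri > 0 \<and> rj > 0 \<and> rk > 0 \<and> a > 1 \<and> b > 1 \<and> c > 1 \<and> Xi ri rj rk a b c > 0 \<longrightarrow>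
            strict_tri (inv_len ri rj c) (inv_len rj rk a) (inv_len rk ri b) \<and>
            (\<forall>zi zj zk. zi \<in> pdisk \<and> zj \<in> pdisk \<and> zk \<in> pdisk \<and>
                hdist zi zj = inv_len ri rj c \<and> hdist zj zk = inv_len rj rk a \<and>
                hdist zk zi = inv_len rk ri b \<longrightarrow>
                (\<exists>oc R. is_orthogonal_circle zi zj zk ri rj rk oc R) \<and>
                (\<forall>oc R. is_orthogonal_circle zi zj zk ri rj rk oc R \<longrightarrow> sphere oc R \<subseteq> pdisk)))
         \<and> Xi_set F fv fe E V \<subseteq> Q_h F fv fe E V"
proof (intro conjI allI impI)
  fix ri rj rk a b c :: real
  assume h: "ri > 0 \<and> rj > 0 \<and> rk > 0 \<and> a > 1 \<and> b > 1 \<and> c > 1 \<and> Xi ri rj rk a b c > 0"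
  show "strict_tri (inv_len ri rj c) (inv_len rj rk a) (inv_len rk ri b)"
    using face_tri h by blast
  fix zi zj zk
  assume "zi \<in> pdisk \<and> zj \<in> pdisk \<and> zk \<in> pdisk \<and>
                hdist zi zj = inv_len ri rj c \<and> hdist zj zk = inv_len rj rk a \<and>
                hdist zk zi = inv_len rk ri b"
  hence fo: "(\<exists>oc R. is_orthogonal_circle zi zj zk ri rj rk oc R) \<and>
         (\<forall>oc R. is_orthogonal_circle zi zj zk ri rj rk oc R \<longrightarrow> sphere oc R \<subseteq> pdisk)"
    using face_orth h by blast
  show "\<exists>oc R. is_orthogonal_circle zi zj zk ri rj rk oc R" using fo by blast
  fix oc R
  assume "is_orthogonal_circle zi zj zk ri rj rk oc R"
  thus "sphere oc R \<subseteq> pdisk" using fo by blast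
next
  show "Xi_set F fv fe E V \<subseteq> Q_h F fv fe E V"
  proof
    fix Ir assume "Ir \<in> Xi_set F fv fe E V"
    then obtain I r where Ir: "Ir = (I, r)" and I1: "\<forall>e\<in>E. I e > 1" and r0: "\<forall>v\<in>V. r v > 0"
      and X: "\<forall>f\<in>F. face_Xi fv fe I r f > 0" unfolding Xi_set_def by auto
    have "strict_tri (inv_len (r (fv f 0)) (r (fv f 1)) (I (fe f 2)))
                         (inv_len (r (fv f 1)) (r (fv f 2)) (I (fe f 0)))
                         (inv_len (r (fv f 2)) (r (fv f 0)) (I (fe f 1)))" if f: "f \<in> F" for f
    proof (rule face_tri)
      have m: "fv f n \<in> V \<and> fe f n \<in> E" if "n < 3" for n using assms f that by blast
      show "r (fv f 0) > 0" "r (fv f 1) > 0" "r (fv f 2) > 0" using m r0 by auto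
      show "I (fe f 0) > 1" "I (fe f 1) > 1" "I (fe f 2) > 1" using m I1 by auto
      show "Xi (r (fv f 0)) (r (fv f 1)) (r (fv f 2)) (I (fe f 0)) (I (fe f 1)) (I (fe f 2)) > 0"
        using X f unfolding face_Xi_def by blast
    qed
    thus "Ir \<in> Q_h F fv fe E V" unfolding Q_h_def Ir using I1 r0 by auto
  qed
qed

end
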